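(* Let $k\ge1$ and $x\ge0$ be integers, and let $a_1,a_2,\dots,a_{2^k+x}$ be (not necessarily distinct) integers. Then at least one of the following holds: (1) there is a subset $I\subseteq\{1,\dots,2^k+x\}$ such that $\sum_{i\in I}a_i$ is divisible by $2^k$ but not by $2^{k+1}$; (2) there exist $x+1$ pairwise disjoint non-empty sets $A_1,\dots,A_{x+1}\subseteq\{1,\dots,2^k+x\}$ such that $\sum_{i\in A_s}a_i\equiv 0\pmod{2^{k+1}}$ for every $s\le x+1$. *)

theory Defs
  imports Main
begin

end

theory Submission
  imports Defs
begin

definition pm :: "int \<Rightarrow> int set \<Rightarrow> int set \<Rightarrow> int set" where
  "pm N A B = (\<lambda>(a,b). (a + b) mod N) ` (A \<times> B)"

lemma pow2_odd_decomp: "0 < (b::nat) \<Longrightarrow> \<exists>v u. b = 2^v * u \<and> odd u"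
proof (induction b rule: less_induct)
  case (less b)
  show ?case
  proof (cases "even b")
    case True
    then obtain c where c: "b = 2 * c" by blast
    with less.prems have "0 < c" "c < b" by auto
    from less.IH[OF this(2,1)] obtain v u where "c = 2^v * u" "odd u" by blast
    with c have "b = 2^(Suc v) * u" by simp
    with \<open>odd u\<close> show ?thesis by blast
  next
    case False
    then have "b = 2^0 * b" by simp
    with False show ?thesis by blast
  qed
qed

lemma mult_hits_M:
  fixes b :: int and k :: nat
  assumes "0 < b" "b < 2^(k+1)"
  shows "\<exists>j::nat. (int j * b) mod 2^(k+1) = 2^k"
proof -
  obtain v u where vu: "nat b = 2^v * u" "odd u" using pow2_odd_decomp[of "nat b"] assms by auto
  have "u > 0" using vu by (metis odd_pos)
  have "2^v \<le> nat b" using vu \<open>u>0\<close> by simp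
  also have "nat b < 2^(k+1)"
  proof -
    have "b < int (2^(k+1))" using assms by simp
    then show ?thesis using assms nat_less_iff by simp
  qed
  finally have "v < k+1" using power_less_imp_less_exp by (metis one_less_numeral_iff semiring_norm(76))
  have bu: "b = 2^v * int u" using vu assms by (metis nat_0_le int_nat_eq less_imp_le of_nat_mult of_nat_numeral of_nat_power)
  obtain w where w: "u = 2*w+1" using vu by (metis oddE)
  have "int (2^(k-v)) * b = 2^k * int u" using bu \<open>v < k+1\<close>
    by (simp add: power_add[symmetric])
  also have "\<dots> = 2^(k+1) * int w + 2^k" using w by (simp add: algebra_simps)
  finally have "(int (2^(k-v)) * b) mod 2^(k+1) = (2^(k+1) * int w + 2^k) mod 2^(k+1)" by simp
  also have "\<dots> = 2^k" by simp
  finally show ?thesis by blast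
qed

lemma pm_finite: "finite A \<Longrightarrow> finite B \<Longrightarrow> finite (pm N A B)"
  unfolding pm_def by simp

lemma cd_lemma:
  fixes k :: nat and N M :: int
  assumes NM: "N = 2^(k+1)" "M = 2^k"
  shows "finite B \<Longrightarrow> A \<subseteq> {0..<N} \<Longrightarrow> B \<subseteq> {0..<N} \<Longrightarrow> 0 \<in> A \<Longrightarrow> 0 \<in> B
     \<Longrightarrow> M \<notin> pm N A B \<Longrightarrow> card A + card B \<le> card (pm N A B) + 1"
proof (induction "card B" arbitrary: A B rule: less_induct)
  case less
  have Npos: "N > 0" using NM by simp
  have finA: "finite A" using less.prems(2) finite_subset by blast
  show ?case
  proof (cases "B \<subseteq> {0}")
    case True
    with less.prems have B0: "B = {0}" by auto
    have "pm N A B = A"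
    proof -
      have "pm N A B = (\<lambda>a. a mod N) ` A" unfolding pm_def B0 by force
      also have "\<dots> = A"
      proof (rule image_cong[THEN trans, OF refl])
        show "\<And>x. x \<in> A \<Longrightarrow> x mod N = id x" using less.prems(2) by auto
      qed simp
      finally show ?thesis .
    qed
    then show ?thesis using B0 by simp
  next
    case False
    then obtain b0 where b0: "b0 \<in> B" "b0 \<noteq> 0" by auto
    show ?thesis
    proof (cases "\<forall>e\<in>A. \<forall>b\<in>B. (e + b) mod N \<in> A")
      case True
      have mult: "(int j * b0) mod N \<in> A" for j :: nat
      proof (induction j)
        case 0
        then show ?case using less.prems(4) by simp
      next
        case (Suc j)
        have "(int (Suc j) * b0) mod N = ((int j * b0) mod N + b0) mod N"
          by (simp add: algebra_simps mod_add_right_eq)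
        then show ?case using True Suc b0 by auto
      qed
      have "0 < b0" "b0 < 2^(k+1)" using b0 less.prems(3) NM by auto
      from mult_hits_M[OF this] obtain j :: nat where "(int j * b0) mod 2^(k+1) = 2^k" by blast
      then have "M \<in> A" using mult[of j] NM by simp
      then have "(M + 0) mod N \<in> pm N A B" unfolding pm_def using less.prems(5) by force
      moreover have "(M + 0) mod N = M" using NM by simp
      ultimately show ?thesis using less.prems(6) by simp
    next
      case False
      then obtain e b1 where eb: "e \<in> A" "b1 \<in> B" "(e + b1) mod N \<notin> A" by blast
      define g where "g = (\<lambda>b. (b + e) mod N)"
      define A' where "A' = A \<union> g ` B"
      define B' where "B' = {b \<in> B. g b \<in> A}"
      have injg: "inj_on g {0..<N}"
      proof (rule inj_onI)
        fix x y assume xy: "x \<in> {0..<N}" "y \<in> {0..<N}" "g x = g y"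
        have "x mod N = ((x + e) mod N - e) mod N" "y mod N = ((y + e) mod N - e) mod N"
          by (simp_all add: mod_diff_left_eq)
        then have "x mod N = y mod N" using xy(3) unfolding g_def by simp
        then show "x = y" using xy by simp
      qed
      have B'B: "B' \<subseteq> B" unfolding B'_def by auto
      have b1B': "b1 \<notin> B'" unfolding B'_def g_def using eb by (simp add: add.commute)
      have cardB': "card B' < card B" using B'B b1B' eb(2) less.prems(1)
        by (metis psubset_card_mono psubset_eq)
      have eN: "e \<in> {0..<N}" using eb less.prems(2) by auto
      have "g 0 = e" unfolding g_def using eN by simp
      then have zB': "0 \<in> B'" unfolding B'_def using less.prems(5) eb by simp
      have zA': "0 \<in> A'" unfolding A'_def using less.prems(4) by simp
      have gN: "g x \<in> {0..<N}" for x unfolding g_def using Npos by simp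
      have A'N: "A' \<subseteq> {0..<N}" unfolding A'_def using less.prems(2) gN by auto
      have B'N: "B' \<subseteq> {0..<N}" using B'B less.prems(3) by auto
      have sub: "pm N A' B' \<subseteq> pm N A B"
      proof
        fix z assume "z \<in> pm N A' B'"
        then obtain a b where ab: "a \<in> A'" "b \<in> B'" "z = (a + b) mod N" unfolding pm_def by auto
        show "z \<in> pm N A B"
        proof (cases "a \<in> A")
          case True
          then show ?thesis using ab B'B unfolding pm_def by force
        next
          case False
          then obtain c where c: "c \<in> B" "a = g c" using ab unfolding A'_def by auto
          have gb: "g b \<in> A" using ab unfolding B'_def by auto
          have "z = (c + e + b) mod N" using ab c unfolding g_def by (simp add: mod_add_left_eq)
          also have "\<dots> = (g b + c) mod N" unfolding g_def by (simp add: mod_add_right_eq algebra_simps)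
          finally show ?thesis using gb c unfolding pm_def by force
        qed
      qed
      have "M \<notin> pm N A' B'" using sub less.prems(6) by auto
      have finB': "finite B'" using B'B less.prems(1) finite_subset by blast
      have IH: "card A' + card B' \<le> card (pm N A' B') + 1"
        using less.hyps[OF cardB' finB' A'N B'N zA' zB' \<open>M \<notin> pm N A' B'\<close>] .
      have "card (pm N A' B') \<le> card (pm N A B)"
        using sub pm_finite[OF finA less.prems(1)] by (simp add: card_mono)
      moreover have "card A' + card B' = card A + card B"
      proof -
        define C where "C = {b \<in> B. g b \<notin> A}"
        have "A' = A \<union> g ` C" unfolding A'_def C_def by auto
        moreover have "A \<inter> g ` C = {}" unfolding C_def by auto
        moreover have "finite (g ` C)" unfolding C_def using less.prems(1) by simp
        ultimately have "card A' = card A + card (g ` C)" using finA by (simp add: card_Un_disjoint)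
        moreover have "card (g ` C) = card C"
        proof (rule card_image[OF inj_on_subset[OF injg]])
          show "C \<subseteq> {0..<N}" using less.prems(3) unfolding C_def by auto
        qed
        moreover have "card B = card B' + card C"
        proof -
          have "B = B' \<union> C" "B' \<inter> C = {}" unfolding B'_def C_def by auto
          then show ?thesis using less.prems(1) by (metis card_Un_disjoint finite_Un)
        qed
        ultimately show ?thesis by simp
      qed
      ultimately show ?thesis using IH by linarith
    qed
  qed
qed

definition ss :: "int \<Rightarrow> (nat \<Rightarrow> int) \<Rightarrow> nat set \<Rightarrow> int set" where
  "ss N f J = (\<lambda>U. (sum f U) mod N) ` Pow J"

lemma ss_finite: "finite J \<Longrightarrow> finite (ss N f J)"
  unfolding ss_def by simp

lemma ss_zero: "0 \<in> ss N f J"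
  unfolding ss_def by (rule image_eqI[of _ _ "{}"]) auto

lemma ss_range: "N > 0 \<Longrightarrow> ss N f J \<subseteq> {0..<N}"
  unfolding ss_def by auto

lemma ss_mono: "J \<subseteq> K \<Longrightarrow> ss N f J \<subseteq> ss N f K"
  unfolding ss_def by auto

lemma ss_union:
  assumes "finite J1" "finite J2" "J1 \<inter> J2 = {}"
  shows "ss N f (J1 \<union> J2) = pm N (ss N f J1) (ss N f J2)"
proof
  show "ss N f (J1 \<union> J2) \<subseteq> pm N (ss N f J1) (ss N f J2)"
  proof
    fix z assume "z \<in> ss N f (J1 \<union> J2)"
    then obtain U where U: "U \<subseteq> J1 \<union> J2" "z = sum f U mod N" unfolding ss_def by auto
    have fin: "finite (U \<inter> J1)" "finite (U \<inter> J2)" using assms U by (auto intro: finite_subset)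
    have "U = (U \<inter> J1) \<union> (U \<inter> J2)" using U by auto
    then have "sum f U = sum f (U \<inter> J1) + sum f (U \<inter> J2)"
      using fin assms(3) by (metis Int_Un_distrib inf_sup_distrib1 sum.union_disjoint inf_bot_right inf_commute inf_left_commute)
    then have "z = (sum f (U \<inter> J1) mod N + sum f (U \<inter> J2) mod N) mod N"
      using U by (simp add: mod_add_eq)
    moreover have "sum f (U \<inter> J1) mod N \<in> ss N f J1" "sum f (U \<inter> J2) mod N \<in> ss N f J2"
      unfolding ss_def by auto
    ultimately show "z \<in> pm N (ss N f J1) (ss N f J2)" unfolding pm_def by force
  qed
next
  show "pm N (ss N f J1) (ss N f J2) \<subseteq> ss N f (J1 \<union> J2)"
  proof
    fix z assume "z \<in> pm N (ss N f J1) (ss N f J2)"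
    then obtain U1 U2 where U: "U1 \<subseteq> J1" "U2 \<subseteq> J2" "z = (sum f U1 mod N + sum f U2 mod N) mod N"
      unfolding pm_def ss_def by auto
    have fin: "finite U1" "finite U2" using assms U by (auto intro: finite_subset)
    have "U1 \<inter> U2 = {}" using U assms(3) by auto
    then have "sum f (U1 \<union> U2) = sum f U1 + sum f U2" using fin by (simp add: sum.union_disjoint)
    then have "z = sum f (U1 \<union> U2) mod N" using U by (simp add: mod_add_eq)
    moreover have "U1 \<union> U2 \<subseteq> J1 \<union> J2" using U by auto
    ultimately show "z \<in> ss N f (J1 \<union> J2)" unfolding ss_def by auto
  qed
qed

lemma mod_sum_eq_zero:
  fixes s d N :: int
  assumes "(s + d) mod N = s mod N"
  shows "d mod N = 0"
proof -
  have "d mod N = ((s + d) - s) mod N" by simp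
  also have "\<dots> = ((s + d) mod N - s mod N) mod N" by (simp add: mod_diff_eq)
  also have "\<dots> = 0" using assms by simp
  finally show ?thesis .
qed

lemma block_bound:
  fixes k :: nat and N M :: int
  assumes NM: "N = 2^(k+1)" "M = 2^k"
  and fin: "finite Q" and ne: "Q \<noteq> {}" and zs: "sum f Q mod N = 0"
  and minl: "\<forall>U. U \<subseteq> Q \<longrightarrow> U \<noteq> {} \<longrightarrow> U \<noteq> Q \<longrightarrow> sum f U mod N \<noteq> 0"
  and av: "M \<notin> ss N f Q"
  shows "2 * card Q \<le> card (ss N f Q) + 1"
proof -
  have Npos: "N > 0" using NM by simp
  obtain xs where xs: "set xs = Q" "distinct xs" using finite_distinct_list[OF fin] by blast
  define q where "q = length xs"
  have q: "q = card Q" using xs distinct_card q_def by metis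
  have qpos: "q > 0" using ne xs q_def by auto
  define U where "U j = set (take j xs)" for j
  have cardU: "j \<le> q \<Longrightarrow> card (U j) = j" for j
    unfolding U_def q_def using xs(2) by (simp add: distinct_card)
  have Umono: "j1 \<le> j2 \<Longrightarrow> U j1 \<subseteq> U j2" for j1 j2
    unfolding U_def by (rule set_take_subset_set_take)
  have UQ: "U j \<subseteq> Q" for j unfolding U_def using xs(1) set_take_subset by metis
  have finU: "finite (U j)" for j unfolding U_def by simp
  have diff: "j1 \<le> j2 \<Longrightarrow> sum f (U j2) = sum f (U j1) + sum f (U j2 - U j1)" for j1 j2
    using sum.subset_diff[OF Umono finU, of j1 j2 f] by simp
  have cardD: "j1 \<le> j2 \<Longrightarrow> j2 \<le> q \<Longrightarrow> card (U j2 - U j1) = j2 - j1" for j1 j2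
    using card_Diff_subset[OF finU Umono] cardU by simp
  define p where "p j = sum f (U j) mod N" for j
  define P where "P = p ` {0..<q}"
  have neq: "p j1 \<noteq> p j2" if j: "j1 < j2" "j2 < q" for j1 j2
  proof
    assume eq: "p j1 = p j2"
    define D where "D = U j2 - U j1"
    have "card D = j2 - j1" unfolding D_def using cardD j by simp
    then have "D \<noteq> {}" using j by auto
    moreover have "D \<subseteq> Q" unfolding D_def using UQ by auto
    moreover have "D \<noteq> Q"
    proof
      assume "D = Q"
      then have "card D = q" using q by simp
      then show False using \<open>card D = j2 - j1\<close> j by simp
    qed
    ultimately have "sum f D mod N \<noteq> 0" using minl by simp
    moreover have "(sum f (U j1) + sum f D) mod N = sum f (U j1) mod N"
      using eq diff[of j1 j2] j unfolding p_def D_def by simp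
    ultimately show False using mod_sum_eq_zero by blast
  qed
  have injp: "inj_on p {0..<q}"
  proof (rule inj_onI)
    fix x y assume "x \<in> {0..<q}" "y \<in> {0..<q}" "p x = p y"
    then show "x = y" using neq by (metis atLeastLessThan_iff linorder_neqE_nat)
  qed
  have cardP: "card P = q" unfolding P_def using card_image[OF injp] by simp
  define neg where "neg x = (- x) mod N" for x
  define nP where "nP = neg ` P"
  have PN: "P \<subseteq> {0..<N}" unfolding P_def p_def using Npos by auto
  have injn: "inj_on neg {0..<N}"
  proof (rule inj_onI)
    fix x y assume xy: "x \<in> {0..<N}" "y \<in> {0..<N}" "neg x = neg y"
    have "x mod N = (- neg x) mod N" "y mod N = (- neg y) mod N" unfolding neg_def
      by (simp_all add: mod_minus_eq)
    then show "x = y" using xy by simp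
  qed
  have cardnP: "card nP = q" unfolding nP_def using card_image[OF inj_on_subset[OF injn PN]] cardP by simp
  have nPN: "nP \<subseteq> {0..<N}" unfolding nP_def neg_def using Npos by auto
  have p0: "p 0 = 0" unfolding p_def U_def by simp
  have zP: "0 \<in> P" unfolding P_def using qpos p0 by force
  have znP: "0 \<in> nP" unfolding nP_def neg_def using zP by force
  have sub: "pm N P nP \<subseteq> ss N f Q"
  proof
    fix z assume "z \<in> pm N P nP"
    then obtain j1 j2 where j: "j1 < q" "j2 < q" "z = (p j1 + neg (p j2)) mod N"
      unfolding pm_def P_def nP_def by auto
    have z: "z = (sum f (U j1) - sum f (U j2)) mod N"
      unfolding j(3) p_def neg_def by (simp add: mod_add_eq mod_diff_eq mod_minus_eq)
    show "z \<in> ss N f Q"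
    proof (cases "j2 \<le> j1")
      case True
      then have "z = sum f (U j1 - U j2) mod N" using z diff[of j2 j1] by simp
      moreover have "U j1 - U j2 \<subseteq> Q" using UQ by auto
      ultimately show ?thesis unfolding ss_def by auto
    next
      case False
      define D where "D = U j2 - U j1"
      have DQ: "D \<subseteq> Q" unfolding D_def using UQ by auto
      have sQ: "sum f Q = sum f (Q - D) + sum f D" using sum.subset_diff[OF DQ fin] .
      have "z = (- sum f D) mod N" using z diff[of j1 j2] False unfolding D_def by simp
      also have "\<dots> = (sum f (Q - D) - sum f Q) mod N" using sQ by simp
      also have "\<dots> = (sum f (Q - D) mod N - sum f Q mod N) mod N" by (simp add: mod_diff_eq)
      also have "\<dots> = sum f (Q - D) mod N" using zs by simp
      finally show ?thesis unfolding ss_def by auto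
    qed
  qed
  have "M \<notin> pm N P nP" using sub av by auto
  from cd_lemma[OF NM _ PN nPN zP znP this] have "card P + card nP \<le> card (pm N P nP) + 1"
    using cardnP finite_subset[OF nPN] by simp
  moreover have "card (pm N P nP) \<le> card (ss N f Q)" using sub ss_finite[OF fin] by (simp add: card_mono)
  ultimately show ?thesis using cardP cardnP q by simp
qed

lemma partition_bound:
  fixes k :: nat and N M :: int
  assumes NM: "N = 2^(k+1)" "M = 2^k"
  shows "finite J \<Longrightarrow> sum f J mod N = 0 \<Longrightarrow> M \<notin> ss N f J \<Longrightarrow>
    \<exists>PP. PP \<subseteq> Pow J \<and> finite PP \<and> (\<forall>Q\<in>PP. Q \<noteq> {} \<and> sum f Q mod N = 0)
       \<and> (\<forall>Q1\<in>PP. \<forall>Q2\<in>PP. Q1 \<noteq> Q2 \<longrightarrow> Q1 \<inter> Q2 = {})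
       \<and> 2 * card J + 1 \<le> card (ss N f J) + 2 * card PP"
proof (induction "card J" arbitrary: J rule: less_induct)
  case less
  have Npos: "N > 0" using NM by simp
  show ?case
  proof (cases "J = {}")
    case True
    have "ss N f J = {0}" unfolding ss_def True by simp
    then show ?thesis using True by (intro exI[of _ "{}"]) simp
  next
    case Jne: False
    show ?thesis
    proof (cases "\<exists>U. U \<subseteq> J \<and> U \<noteq> {} \<and> U \<noteq> J \<and> sum f U mod N = 0")
      case False
      have minl: "\<forall>U. U \<subseteq> J \<longrightarrow> U \<noteq> {} \<longrightarrow> U \<noteq> J \<longrightarrow> sum f U mod N \<noteq> 0"
      proof (intro allI impI)
        fix U assume a: "U \<subseteq> J" "U \<noteq> {}" "U \<noteq> J"
        show "sum f U mod N \<noteq> 0"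
        proof
          assume "sum f U mod N = 0"
          with a have "\<exists>U. U \<subseteq> J \<and> U \<noteq> {} \<and> U \<noteq> J \<and> sum f U mod N = 0" by (intro exI[of _ U]) simp
          with False show False by contradiction
        qed
      qed
      have "2 * card J \<le> card (ss N f J) + 1"
        using block_bound[OF NM less.prems(1) Jne less.prems(2) minl less.prems(3)] .
      then have "2 * card J + 1 \<le> card (ss N f J) + 2 * card {J}" by simp
      moreover have "{J} \<subseteq> Pow J" "finite {J}" by auto
      moreover have "\<forall>Q\<in>{J}. Q \<noteq> {} \<and> sum f Q mod N = 0" using Jne less.prems(2) by simp
      moreover have "\<forall>Q1\<in>{J}. \<forall>Q2\<in>{J}. Q1 \<noteq> Q2 \<longrightarrow> Q1 \<inter> Q2 = {}" by simp
      ultimately show ?thesis by blast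
    next
      case True
      then obtain U where "U \<subseteq> J \<and> U \<noteq> {} \<and> U \<noteq> J \<and> sum f U mod N = 0" ..
      then have U: "U \<subseteq> J" "U \<noteq> {}" "U \<noteq> J" "sum f U mod N = 0" by simp_all
      define V where "V = J - U"
      have finU: "finite U" and finV: "finite V" using U less.prems(1) finite_subset unfolding V_def by auto
      have "U \<subset> J" using U by auto
      then have cU: "card U < card J" using less.prems(1) by (simp add: psubset_card_mono)
      have "V \<subset> J" using U unfolding V_def by auto
      then have cV: "card V < card J" using less.prems(1) by (simp add: psubset_card_mono)
      have sJ: "sum f J = sum f V + sum f U" unfolding V_def using sum.subset_diff[OF U(1) less.prems(1)] .
      have sV: "sum f V mod N = 0"
      proof -
        have "sum f V mod N = (sum f J - sum f U) mod N" using sJ by simp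
        also have "\<dots> = (sum f J mod N - sum f U mod N) mod N" by (simp add: mod_diff_eq)
        finally show ?thesis using less.prems(2) U(4) by simp
      qed
      have JUV: "J = U \<union> V" "U \<inter> V = {}" unfolding V_def using U by auto
      have avU: "M \<notin> ss N f U" using ss_mono[OF U(1)] less.prems(3) by auto
      have avV: "M \<notin> ss N f V" using ss_mono[of V J] less.prems(3) unfolding V_def by auto
      from less.hyps[OF cU finU U(4) avU] obtain P1 where "P1 \<subseteq> Pow U \<and> finite P1 \<and> (\<forall>Q\<in>P1. Q \<noteq> {} \<and> sum f Q mod N = 0)
        \<and> (\<forall>Q1\<in>P1. \<forall>Q2\<in>P1. Q1 \<noteq> Q2 \<longrightarrow> Q1 \<inter> Q2 = {})
        \<and> 2 * card U + 1 \<le> card (ss N f U) + 2 * card P1" ..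
      then have P1: "P1 \<subseteq> Pow U" "finite P1" "\<forall>Q\<in>P1. Q \<noteq> {} \<and> sum f Q mod N = 0"
        "\<forall>Q1\<in>P1. \<forall>Q2\<in>P1. Q1 \<noteq> Q2 \<longrightarrow> Q1 \<inter> Q2 = {}"
        "2 * card U + 1 \<le> card (ss N f U) + 2 * card P1" by simp_all
      from less.hyps[OF cV finV sV avV] obtain P2 where "P2 \<subseteq> Pow V \<and> finite P2 \<and> (\<forall>Q\<in>P2. Q \<noteq> {} \<and> sum f Q mod N = 0)
        \<and> (\<forall>Q1\<in>P2. \<forall>Q2\<in>P2. Q1 \<noteq> Q2 \<longrightarrow> Q1 \<inter> Q2 = {})
        \<and> 2 * card V + 1 \<le> card (ss N f V) + 2 * card P2" ..
      then have P2: "P2 \<subseteq> Pow V" "finite P2" "\<forall>Q\<in>P2. Q \<noteq> {} \<and> sum f Q mod N = 0"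
        "\<forall>Q1\<in>P2. \<forall>Q2\<in>P2. Q1 \<noteq> Q2 \<longrightarrow> Q1 \<inter> Q2 = {}"
        "2 * card V + 1 \<le> card (ss N f V) + 2 * card P2" by simp_all
      have ssJ: "ss N f J = pm N (ss N f U) (ss N f V)" using ss_union[OF finU finV JUV(2)] JUV(1) by simp
      have cdJ: "card (ss N f U) + card (ss N f V) \<le> card (ss N f J) + 1"
        unfolding ssJ
        by (rule cd_lemma[OF NM ss_finite[OF finV] ss_range[OF Npos] ss_range[OF Npos] ss_zero ss_zero])
           (use less.prems(3) ssJ in simp)
      have disjP: "P1 \<inter> P2 = {}"
      proof (rule ccontr)
        assume "P1 \<inter> P2 \<noteq> {}"
        then obtain Q where "Q \<in> P1" "Q \<in> P2" by blast
        then have "Q \<subseteq> U" "Q \<subseteq> V" "Q \<noteq> {}" using P1 P2 by auto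
        then show False using JUV(2) by blast
      qed
      have cP: "card (P1 \<union> P2) = card P1 + card P2" using disjP P1(2) P2(2) by (simp add: card_Un_disjoint)
      have cJ: "card J = card U + card V" using JUV finU finV by (simp add: card_Un_disjoint)
      show ?thesis
      proof (intro exI[of _ "P1 \<union> P2"] conjI)
        show "P1 \<union> P2 \<subseteq> Pow J" using P1(1) P2(1) JUV(1) by auto
        show "finite (P1 \<union> P2)" using P1(2) P2(2) by simp
        show "\<forall>Q\<in>P1 \<union> P2. Q \<noteq> {} \<and> sum f Q mod N = 0" using P1(3) P2(3) by blast
        show "\<forall>Q1\<in>P1 \<union> P2. \<forall>Q2\<in>P1 \<union> P2. Q1 \<noteq> Q2 \<longrightarrow> Q1 \<inter> Q2 = {}"
        proof (intro ballI impI)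
          fix Q1 Q2 assume q: "Q1 \<in> P1 \<union> P2" "Q2 \<in> P1 \<union> P2" "Q1 \<noteq> Q2"
          show "Q1 \<inter> Q2 = {}"
          proof (cases "Q1 \<in> P1")
            case q1: True
            show ?thesis
            proof (cases "Q2 \<in> P1")
              case True then show ?thesis using q1 q(3) P1(4) by simp
            next
              case False
              then have "Q2 \<in> P2" using q by simp
              then have "Q2 \<subseteq> V" using P2(1) by auto
              moreover have "Q1 \<subseteq> U" using q1 P1(1) by auto
              ultimately show ?thesis using JUV(2) by auto
            qed
          next
            case q1: False
            then have q1': "Q1 \<in> P2" using q by simp
            show ?thesis
            proof (cases "Q2 \<in> P2")
              case True then show ?thesis using q1' q(3) P2(4) by simp
            next
              case False
              then have "Q2 \<in> P1" using q by simp
              then have "Q2 \<subseteq> U" using P1(1) by auto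
              moreover have "Q1 \<subseteq> V" using q1' P2(1) by auto
              ultimately show ?thesis using JUV(2) by auto
            qed
          qed
        qed
        show "2 * card J + 1 \<le> card (ss N f J) + 2 * card (P1 \<union> P2)"
          using P1(5) P2(5) cdJ cP cJ by linarith
      qed
    qed
  qed
qed

lemma mod_M_key:
  fixes s :: int and k :: nat
  assumes "s mod 2^(k+1) = 2^k"
  shows "(2::int)^k dvd s \<and> \<not> (2::int)^(k+1) dvd s"
proof
  have "s = 2^(k+1) * (s div 2^(k+1)) + 2^k" using assms by (metis div_mult_mod_eq add.commute mult.commute)
  then have "s = 2^k * (2 * (s div 2^(k+1)) + 1)" by (simp add: algebra_simps)
  then show "(2::int)^k dvd s" by (metis dvd_triv_left)
  show "\<not> (2::int)^(k+1) dvd s"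
  proof
    assume "(2::int)^(k+1) dvd s"
    then have "s mod 2^(k+1) = 0" by simp
    then show False using assms by simp
  qed
qed

theorem lemma1p11:
  fixes k x :: nat and a :: "nat \<Rightarrow> int"
  assumes "k \<ge> 1"
  shows "(\<exists>I \<subseteq> {1..2^k + x}.
            (2::int)^k dvd (\<Sum>i\<in>I. a i) \<and> \<not> (2::int)^(k+1) dvd (\<Sum>i\<in>I. a i))
       \<or> (\<exists>A :: nat \<Rightarrow> nat set.
            (\<forall>s\<in>{1..x+1}. A s \<subseteq> {1..2^k + x} \<and> A s \<noteq> {}
                 \<and> (2::int)^(k+1) dvd (\<Sum>i\<in>A s. a i))
          \<and> (\<forall>s\<in>{1..x+1}. \<forall>t\<in>{1..x+1}. s \<noteq> t \<longrightarrow> A s \<inter> A t = {}))"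
proof (cases "\<exists>I \<subseteq> {1..2^k + x}.
            (2::int)^k dvd (\<Sum>i\<in>I. a i) \<and> \<not> (2::int)^(k+1) dvd (\<Sum>i\<in>I. a i)")
  case True
  then show ?thesis by (rule disjI1)
next
  case False
  define n :: nat where "n = 2^k + x"
  define N :: int where "N = 2^(k+1)"
  define M :: int where "M = 2^k"
  have NM: "N = 2^(k+1)" "M = 2^k" unfolding N_def M_def by simp_all
  have Npos: "N > 0" unfolding N_def by simp
  define f where "f i = (if i = 0 then - (\<Sum>j\<in>{1..n}. a j) else a i)" for i :: nat
  define J where "J = {0..n}"
  have fa: "sum f U = sum a U" if "0 \<notin> U" for U
    using that by (intro sum.cong) (auto simp: f_def)
  have J0: "J = insert 0 {1..n}" unfolding J_def by auto
  have sumJ: "sum f J = 0"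
  proof -
    have "sum f J = f 0 + sum f {1..n}" unfolding J0 by simp
    also have "sum f {1..n} = sum a {1..n}" by (rule fa) simp
    finally show ?thesis unfolding f_def by simp
  qed
  have finJ: "finite J" unfolding J_def by simp
  have noI: "\<not> (sum a I mod N = M)" if "I \<subseteq> {1..n}" for I
  proof
    assume "sum a I mod N = M"
    then have "(2::int)^k dvd sum a I \<and> \<not> (2::int)^(k+1) dvd sum a I"
      using mod_M_key[of "sum a I" k] unfolding NM by simp
    then show False using False that unfolding n_def by blast
  qed
  have av: "M \<notin> ss N f J"
  proof
    assume "M \<in> ss N f J"
    then obtain U where U: "U \<subseteq> J" "sum f U mod N = M" unfolding ss_def by auto
    show False
    proof (cases "0 \<in> U")
      case nU: False
      have "U \<subseteq> {1..n}"
      proof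
        fix i assume "i \<in> U"
        then have "i \<in> {0..n}" using U(1) unfolding J_def by blast
        moreover have "i \<noteq> 0"
        proof
          assume "i = 0"
          with \<open>i \<in> U\<close> nU show False by simp
        qed
        ultimately show "i \<in> {1..n}" by simp
      qed
      moreover have "sum a U mod N = M" using U(2) fa[OF nU] by simp
      ultimately show False using noI by blast
    next
      case True
      define I where "I = {1..n} - (U - {0})"
      have U0: "U - {0} \<subseteq> {1..n}" using U(1) unfolding J_def by auto
      have finU0: "finite (U - {0})" using U0 finite_subset by blast
      have "sum a {1..n} = sum a I + sum a (U - {0})"
        unfolding I_def using sum.subset_diff[OF U0] by simp
      moreover have "sum f U = f 0 + sum f (U - {0})"
        using True finU0 by (metis insert_Diff sum.insert Diff_iff singletonI)
      moreover have "sum f (U - {0}) = sum a (U - {0})" by (rule fa) simp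
      ultimately have sU: "sum f U = - sum a I" unfolding f_def by simp
      have "sum a I mod N = (- ((- sum a I) mod N)) mod N" by (simp add: mod_minus_eq)
      also have "\<dots> = (- M) mod N" using U(2) sU by simp
      also have "\<dots> = M" unfolding NM
      proof -
        have "-((2::int)^k) = 2^k + (-1) * 2^(k+1)" by simp
        then have "(-((2::int)^k)) mod 2^(k+1) = (2^k + (-1) * 2^(k+1)) mod 2^(k+1)" by simp
        also have "\<dots> = (2::int)^k mod 2^(k+1)" by (rule mod_mult_self1)
        also have "\<dots> = 2^k" by (rule mod_pos_pos_trivial) simp_all
        finally show "(-((2::int)^k)) mod 2^(k+1) = 2^k" .
      qed
      finally have "sum a I mod N = M" .
      moreover have "I \<subseteq> {1..n}" unfolding I_def by auto
      ultimately show False using noI by blast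
    qed
  qed
  from partition_bound[OF NM finJ _ av] obtain PP where
    "PP \<subseteq> Pow J \<and> finite PP \<and> (\<forall>Q\<in>PP. Q \<noteq> {} \<and> sum f Q mod N = 0)
       \<and> (\<forall>Q1\<in>PP. \<forall>Q2\<in>PP. Q1 \<noteq> Q2 \<longrightarrow> Q1 \<inter> Q2 = {})
       \<and> 2 * card J + 1 \<le> card (ss N f J) + 2 * card PP" using sumJ by auto
  then have PP: "PP \<subseteq> Pow J" "finite PP" "\<forall>Q\<in>PP. Q \<noteq> {} \<and> sum f Q mod N = 0"
       "\<forall>Q1\<in>PP. \<forall>Q2\<in>PP. Q1 \<noteq> Q2 \<longrightarrow> Q1 \<inter> Q2 = {}"
       "2 * card J + 1 \<le> card (ss N f J) + 2 * card PP" by simp_all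
  have "ss N f J \<subseteq> {0..<N} - {M}" using ss_range[OF Npos] av by auto
  then have "card (ss N f J) \<le> card ({0..<N} - {M})" by (intro card_mono) auto
  also have "\<dots> = nat N - 1" using Npos unfolding NM by simp
  also have "nat N = 2 * 2^k"
  proof -
    have "N = int (2 * 2^k)" unfolding NM by simp
    then show ?thesis by (simp only: nat_int)
  qed
  finally have cs: "card (ss N f J) \<le> 2 * 2^k - 1" .
  have cJ: "card J = n + 1" unfolding J_def by simp
  have cPP: "x + 2 \<le> card PP" using PP(5) cs cJ unfolding n_def by simp
  define G where "G = {Q \<in> PP. 0 \<notin> Q}"
  define H where "H = {Q \<in> PP. 0 \<in> Q}"
  have "PP = G \<union> H" unfolding G_def H_def by auto
  then have "card PP \<le> card G + card H" by (metis card_Un_le)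
  moreover have "card H \<le> Suc 0"
  proof -
    have "finite H" unfolding H_def using PP(2) by simp
    moreover have "\<forall>Q1\<in>H. \<forall>Q2\<in>H. Q1 = Q2"
    proof (intro ballI)
      fix Q1 Q2 assume "Q1 \<in> H" "Q2 \<in> H"
      then have "Q1 \<in> PP" "Q2 \<in> PP" "0 \<in> Q1 \<inter> Q2" unfolding H_def by auto
      then show "Q1 = Q2" using PP(4) by blast
    qed
    ultimately show ?thesis using card_le_Suc0_iff_eq by blast
  qed
  ultimately have "x + 1 \<le> card G" using cPP by linarith
  then obtain G' where G': "G' \<subseteq> G" "card G' = x + 1" "finite G'" by (rule obtain_subset_with_card_n)
  obtain h where h: "bij_betw h {1..card G'} G'" using ex_bij_betw_nat_finite_1[OF G'(3)] by blast
  have h': "bij_betw h {1..x+1} G'" using h G'(2) by simp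
  show ?thesis
  proof (rule disjI2, rule exI[of _ h], intro conjI ballI impI)
    fix s assume s: "s \<in> {1..x+1}"
    then have hs: "h s \<in> G" using h' G'(1) bij_betwE by blast
    then have hP: "h s \<in> PP" "0 \<notin> h s" unfolding G_def by auto
    then have "h s \<subseteq> J" using PP(1) by auto
    show "h s \<subseteq> {1..2^k + x}"
    proof
      fix i assume "i \<in> h s"
      then have "i \<in> {0..n}" using \<open>h s \<subseteq> J\<close> unfolding J_def by blast
      moreover have "i \<noteq> 0"
      proof
        assume "i = 0"
        with \<open>i \<in> h s\<close> hP(2) show False by simp
      qed
      ultimately show "i \<in> {1..2^k + x}" unfolding n_def by simp
    qed
    show "h s \<noteq> {}" using hP PP(3) by simp
    have "sum f (h s) mod N = 0" using hP PP(3) by simp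
    then have "N dvd sum a (h s)" using fa[OF hP(2)] by (simp add: dvd_eq_mod_eq_0)
    then show "(2::int)^(k+1) dvd sum a (h s)" unfolding NM .
  next
    fix s t assume st: "s \<in> {1..x+1}" "t \<in> {1..x+1}" "s \<noteq> t"
    then have "h s \<noteq> h t" using h' by (metis bij_betw_def inj_on_def)
    moreover have "h s \<in> PP" "h t \<in> PP" using st h' G'(1) bij_betwE unfolding G_def by blast+
    ultimately show "h s \<inter> h t = {}" using PP(4) by blast
  qed
qed

end
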